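(* Let $\mathcal S$ be a nonempty self-dual, nested, chain-vanishing collection of nonempty subsets of a set $X$. Then $\sim_{\mathcal S}$ is an equivalence relation on $\mathcal S$ and the graph $\mathcal T_{\mathcal S}$ is a tree (connected, acyclic, without loops or multiple edges).
   Context: Fix a nonempty set $X$; $A^c:=X\setminus A$, $A^1:=A$, $A^{-1}:=A^c$. Sets $A,B\subseteq X$ are orthogonal, $A\perp B$, if $A\cap B=\emptyset$ and $A\ne B^c$. For a collection $\mathcal S$ of nonempty subsets of $X$ and $A,B\in\mathcal S$, $B$ is $\mathcal S$-maximally orthogonal to $A$ if $B\perp A$ and there is no $C\in\mathcal S$ with $C\perp A$ and $C\supsetneq B$; $[A]_{\mathcal S}:=\{A\}\cup\{B\in\mathcal S: B \text{ is } \mathcal S\text{-maximally orthogonal to } A\}$; $A\sim_{\mathcal S}B$ iff $A\in[B]_{\mathcal S}$. A chain is a sequence $(A_n)_{n\in\mathbb N}$ strictly increasing or strictly decreasing under inclusion; a decreasing (resp. increasing) chain is $\mathcal S$-vanishing if there is no $B\in\mathcal S$ with $B\subseteq A_n$ (resp. $B\cap A_n=\emptyset$) for all $n$; $\mathcal S$ is chain-vanishing if every chain of members of $\mathcal S$ is $\mathcal S$-vanishing. Sets $A,B$ are nested if some corner $A^i\cap B^j$ ($i,j\in\{-1,1\}$) is empty; $\mathcal S$ is nested if any two members are nested. $\mathcal S$ is self-dual if $A\in\mathcal S\Rightarrow A^c\in\mathcal S$. $\mathcal T_{\mathcal S}$ is the undirected graph with vertex set $\mathcal S/{\sim_{\mathcal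 S}}$ having an edge between $[A]_{\mathcal S}$ and $[A^c]_{\mathcal S}$ for every $A$ with $A,A^c\in\mathcal S$. *)

theory Defs
  imports Main
begin

definition orth :: "'a set \<Rightarrow> 'a set \<Rightarrow> 'a set \<Rightarrow> bool" where
  "orth X A B \<longleftrightarrow> A \<inter> B = {} \<and> A \<noteq> X - B"

definition max_orth :: "'a set \<Rightarrow> 'a set set \<Rightarrow> 'a set \<Rightarrow> 'a set \<Rightarrow> bool" where
  "max_orth X S A B \<longleftrightarrow> orth X B A \<and> \<not> (\<exists>C\<in>S. orth X C A \<and> B \<subset> C)"

definition cls :: "'a set \<Rightarrow> 'a set set \<Rightarrow> 'a set \<Rightarrow> 'a set set" where
  "cls X S A = {A} \<union> {B \<in> S. max_orth X S A B}"

definition simrel :: "'a set \<Rightarrow> 'a set set \<Rightarrow> ('a set \<times> 'a set) set" where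
  "simrel X S = {(A, B). A \<in> S \<and> B \<in> S \<and> A \<in> cls X S B}"

definition strict_inc_chain :: "(nat \<Rightarrow> 'a set) \<Rightarrow> bool" where
  "strict_inc_chain f \<longleftrightarrow> (\<forall>n. f n \<subset> f (Suc n))"

definition strict_dec_chain :: "(nat \<Rightarrow> 'a set) \<Rightarrow> bool" where
  "strict_dec_chain f \<longleftrightarrow> (\<forall>n. f (Suc n) \<subset> f n)"

definition vanishing_dec :: "'a set set \<Rightarrow> (nat \<Rightarrow> 'a set) \<Rightarrow> bool" where
  "vanishing_dec S f \<longleftrightarrow> \<not> (\<exists>B\<in>S. \<forall>n. B \<subseteq> f n)"

definition vanishing_inc :: "'a set set \<Rightarrow> (nat \<Rightarrow> 'a set) \<Rightarrow> bool" where
  "vanishing_inc S f \<longleftrightarrow> \<not> (\<exists>B\<in>S. \<forall>n. B \<inter> f n = {})"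

definition chain_vanishing :: "'a set set \<Rightarrow> bool" where
  "chain_vanishing S \<longleftrightarrow>
     (\<forall>f. (\<forall>n. f n \<in> S) \<longrightarrow>
        (strict_inc_chain f \<longrightarrow> vanishing_inc S f) \<and>
        (strict_dec_chain f \<longrightarrow> vanishing_dec S f))"

definition nested_pair :: "'a set \<Rightarrow> 'a set \<Rightarrow> 'a set \<Rightarrow> bool" where
  "nested_pair X A B \<longleftrightarrow>
     A \<inter> B = {} \<or> A \<inter> (X - B) = {} \<or> (X - A) \<inter> B = {} \<or> (X - A) \<inter> (X - B) = {}"

definition nested :: "'a set \<Rightarrow> 'a set set \<Rightarrow> bool" where
  "nested X S \<longleftrightarrow> (\<forall>A\<in>S. \<forall>B\<in>S. nested_pair X A B)"

definition self_dual :: "'a set \<Rightarrow> 'a set set \<Rightarrow> bool" where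
  "self_dual X S \<longleftrightarrow> (\<forall>A\<in>S. X - A \<in> S)"

text \<open>Undirected multigraphs: vertex set V, edge set E, and an endpoint map
  ends giving the set of endpoints of each edge (one element for a loop).\<close>

definition ug_walk_adj :: "'e set \<Rightarrow> ('e \<Rightarrow> 'v set) \<Rightarrow> ('v \<times> 'v) set" where
  "ug_walk_adj E ends = {(u, v). \<exists>e\<in>E. ends e = {u, v}}"

definition ug_no_loops :: "'e set \<Rightarrow> ('e \<Rightarrow> 'v set) \<Rightarrow> bool" where
  "ug_no_loops E ends \<longleftrightarrow> (\<forall>e\<in>E. \<forall>u v. ends e = {u, v} \<longrightarrow> u \<noteq> v)"

definition ug_no_multi :: "'e set \<Rightarrow> ('e \<Rightarrow> 'v set) \<Rightarrow> bool" where
  "ug_no_multi E ends \<longleftrightarrow> inj_on ends E"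

definition ug_connected :: "'v set \<Rightarrow> 'e set \<Rightarrow> ('e \<Rightarrow> 'v set) \<Rightarrow> bool" where
  "ug_connected V E ends \<longleftrightarrow> (\<forall>u\<in>V. \<forall>v\<in>V. (u, v) \<in> (ug_walk_adj E ends)\<^sup>*)"

text \<open>A cycle of length n \<ge> 1: n distinct edges and n distinct vertices, the i-th edge
  joining the i-th and the (i+1 mod n)-th vertex (length 1 = loop, 2 = parallel edges).\<close>
definition ug_cycle :: "'e set \<Rightarrow> ('e \<Rightarrow> 'v set) \<Rightarrow> 'e list \<Rightarrow> 'v list \<Rightarrow> bool" where
  "ug_cycle E ends es vs \<longleftrightarrow>
     length es = length vs \<and> es \<noteq> [] \<and> distinct es \<and> distinct vs \<and> set es \<subseteq> E \<and>
     (\<forall>i < length es. ends (es ! i) = {vs ! i, vs ! (Suc i mod length vs)})"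

definition ug_acyclic :: "'e set \<Rightarrow> ('e \<Rightarrow> 'v set) \<Rightarrow> bool" where
  "ug_acyclic E ends \<longleftrightarrow> \<not> (\<exists>es vs. ug_cycle E ends es vs)"

definition ug_wf :: "'v set \<Rightarrow> 'e set \<Rightarrow> ('e \<Rightarrow> 'v set) \<Rightarrow> bool" where
  "ug_wf V E ends \<longleftrightarrow> (\<forall>e\<in>E. ends e \<subseteq> V \<and> (\<exists>u v. ends e = {u, v}))"

definition ug_tree :: "'v set \<Rightarrow> 'e set \<Rightarrow> ('e \<Rightarrow> 'v set) \<Rightarrow> bool" where
  "ug_tree V E ends \<longleftrightarrow> ug_wf V E ends \<and> ug_connected V E ends \<and> ug_acyclic E ends \<and>
     ug_no_loops E ends \<and> ug_no_multi E ends"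

definition TS_verts :: "'a set \<Rightarrow> 'a set set \<Rightarrow> 'a set set set" where
  "TS_verts X S = S // simrel X S"

definition TS_edges :: "'a set \<Rightarrow> 'a set set \<Rightarrow> 'a set set set" where
  "TS_edges X S = {{A, X - A} | A. A \<in> S \<and> X - A \<in> S}"

definition TS_ends :: "'a set \<Rightarrow> 'a set set \<Rightarrow> 'a set set \<Rightarrow> 'a set set set" where
  "TS_ends X S e = (\<lambda>C. simrel X S `` {C}) ` e"

end

theory Submission
  imports Defs
begin

locale NS =
  fixes X :: "'a set" and S :: "'a set set"
  assumes ne: "S \<noteq> {}" and sub: "\<forall>A\<in>S. A \<noteq> {} \<and> A \<subseteq> X"
    and sd: "self_dual X S" and nes: "nested X S" and cv: "chain_vanishing S"
begin

lemma Ssub: "A \<in> S \<Longrightarrow> A \<subseteq> X" using sub by blast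
lemma Sne: "A \<in> S \<Longrightarrow> A \<noteq> {}" using sub by blast
lemma Scomp: "A \<in> S \<Longrightarrow> X - A \<in> S" using sd unfolding self_dual_def by blast
lemma Scompne: "A \<in> S \<Longrightarrow> X - A \<noteq> {}" using Sne Scomp by blast
lemma dd: "A \<in> S \<Longrightarrow> X - (X - A) = A" using Ssub by blast
lemma nest: "A \<in> S \<Longrightarrow> B \<in> S \<Longrightarrow> A \<inter> B = {} \<or> A \<subseteq> B \<or> B \<subseteq> A \<or> X - A \<subseteq> B"
  using nes Ssub[of A] Ssub[of B] unfolding nested_def nested_pair_def by blast

definition cov where "cov D B \<longleftrightarrow> B \<subset> D \<and> \<not>(\<exists>C\<in>S. B \<subset> C \<and> C \<subset> D)"

lemma mo_iff: "A \<in> S \<Longrightarrow> B \<in> S \<Longrightarrow> max_orth X S A B \<longleftrightarrow> cov (X - A) B"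
proof -
  assume AS: "A \<in> S" and BS: "B \<in> S"
  have o: "\<And>C. C \<in> S \<Longrightarrow> orth X C A \<longleftrightarrow> C \<subset> X - A"
    unfolding orth_def using Ssub by blast
  show ?thesis unfolding max_orth_def cov_def using o[OF BS] o by blast
qed

lemma sim_iff: "(A,B) \<in> simrel X S \<longleftrightarrow> A \<in> S \<and> B \<in> S \<and> (A = B \<or> cov (X - B) A)"
  unfolding simrel_def cls_def using mo_iff by (auto simp del: Set.psubset_eq)

lemma cov_sym: assumes "A\<in>S" "B\<in>S" "cov (X-B) A" shows "cov (X-A) B"
proof -
  have "B \<subset> X - A" using assms Ssub[of A] Ssub[of B] unfolding cov_def by blast
  moreover have "\<not>(\<exists>C\<in>S. B \<subset> C \<and> C \<subset> X - A)"
  proof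
    assume "\<exists>C\<in>S. B \<subset> C \<and> C \<subset> X - A" then obtain C where C: "C\<in>S" "B \<subset> C" "C \<subset> X - A" by blast
    have "X - C \<in> S" using Scomp C by auto
    moreover have "A \<subset> X - C" "X - C \<subset> X - B" using C Ssub[of A] Ssub[of B] Ssub[of C] assms(1,2) by blast+
    ultimately show False using assms(3) unfolding cov_def by blast
  qed
  ultimately show ?thesis unfolding cov_def by blast
qed

lemma cov_trans: assumes AS: "A\<in>S" and BS: "B\<in>S" and CS: "C\<in>S" and ab: "cov (X-B) A"
  and cb: "cov (X-B) C" and ac: "A \<noteq> C" shows "cov (X-C) A"
proof -
  have AX: "A \<subseteq> X" and BX: "B \<subseteq> X" and CX: "C \<subseteq> X" using Ssub AS BS CS by auto
  have An: "A \<noteq> {}" and Bn: "B \<noteq> {}" and Cn: "C \<noteq> {}" using Sne AS BS CS by auto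
  have AB: "A \<subset> X-B" and CB: "C \<subset> X - B" using ab cb cov_def by auto
  have AB1: "A \<subseteq> X - B" and CB1: "C \<subseteq> X - B" using AB CB by auto
  have AC: "A \<inter> C = {}"
  proof -
    have "A \<subseteq> C \<Longrightarrow> False" using ab AB CB CS ac unfolding cov_def by blast
    moreover have "C \<subseteq> A \<Longrightarrow> False" using cb AB CB AS ac unfolding cov_def by blast
    moreover have "X - A \<subseteq> C \<Longrightarrow> False"
    proof -
      assume h: "X - A \<subseteq> C"
      have "B \<subseteq> {}" using h AB1 CB1 BX by blast
      thus False using Bn by blast
    qed
    ultimately show ?thesis using nest[OF AS CS] by blast
  qed
  have "A \<noteq> X - C"
  proof
    assume h: "A = X - C"
    have "B \<subseteq> {}" using h AB1 CB1 BX by blast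
    thus False using Bn by blast
  qed
  moreover have "A \<subseteq> X - C" using AC AX by blast
  ultimately have AC': "A \<subset> X - C" by blast
  have cbc: "cov (X - C) B" using cov_sym[OF CS BS cb] .
  have "\<not>(\<exists>D\<in>S. A \<subset> D \<and> D \<subset> X - C)"
  proof
    assume "\<exists>D\<in>S. A \<subset> D \<and> D \<subset> X - C"
    then obtain D where D: "D \<in> S" "A \<subset> D" "D \<subset> X - C" by blast
    have DX: "D \<subseteq> X" using Ssub D(1) by auto
    have D1: "A \<subseteq> D" "D \<subseteq> X - C" using D by auto
    have c1: "D \<inter> B = {} \<Longrightarrow> False"
    proof -
      assume h: "D \<inter> B = {}"
      show False
      proof (cases "D = X - B")
        case True
        have "C \<subseteq> {}" using True D1 CB1 CX by blast
        thus False using Cn by blast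
      next
        case False
        hence "D \<subset> X - B" using h DX by blast
        thus False using D ab unfolding cov_def by blast
      qed
    qed
    have c2: "D \<subseteq> B \<Longrightarrow> False"
    proof -
      assume "D \<subseteq> B"
      hence "A \<subseteq> {}" using D1 AB1 by blast
      thus False using An by blast
    qed
    have c3: "B \<subseteq> D \<Longrightarrow> False"
    proof -
      assume h: "B \<subseteq> D"
      have "\<not> B \<subset> D" using cbc D unfolding cov_def by blast
      hence "B = D" using h by blast
      hence "A \<subseteq> {}" using D1 AB1 by blast
      thus False using An by blast
    qed
    have c4: "X - D \<subseteq> B \<Longrightarrow> False"
    proof -
      assume h: "X - D \<subseteq> B"
      have "C \<subseteq> {}" using h D1 CB1 CX by blast
      thus False using Cn by blast
    qed
    from nest[OF D(1) BS] show False
      apply (elim disjE) using c1 c2 c3 c4 by auto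
  qed
  thus ?thesis using AC' unfolding cov_def by blast
qed

lemma equiv_sim: "equiv S (simrel X S)"
proof (rule equivI)
  show "simrel X S \<subseteq> S \<times> S" using sim_iff by auto
  show "refl_on S (simrel X S)" unfolding refl_on_def using sim_iff by auto
  show "sym (simrel X S)" unfolding sym_def using sim_iff cov_sym by metis
  show "trans (simrel X S)" unfolding trans_def
  proof (intro allI impI)
    fix x y z assume "(x,y) \<in> simrel X S" "(y,z) \<in> simrel X S"
    thus "(x,z) \<in> simrel X S" using sim_iff cov_sym cov_trans by metis
  qed
qed


abbreviation cl where "cl A \<equiv> simrel X S `` {A}"
abbreviation RR where "RR \<equiv> ug_walk_adj (TS_edges X S) (TS_ends X S)"

lemma cl_eq: "A \<in> S \<Longrightarrow> B \<in> S \<Longrightarrow> cl A = cl B \<longleftrightarrow> (A,B) \<in> simrel X S"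
  by (rule eq_equiv_class_iff[OF equiv_sim])

lemma same_cl: "A \<in> S \<Longrightarrow> B \<in> S \<Longrightarrow> cl A = cl B \<Longrightarrow> A \<noteq> B \<Longrightarrow> A \<subset> X - B"
  using cl_eq sim_iff cov_def by metis

lemma cl_comp: assumes "A \<in> S" shows "cl A \<noteq> cl (X - A)"
proof
  assume h: "cl A = cl (X - A)"
  have "A \<noteq> X - A" using Sne[OF assms] by blast
  hence "A \<subset> X - (X - A)" using same_cl[OF assms Scomp[OF assms] h] by blast
  thus False using dd[OF assms] by simp
qed

lemma ends_eq: "TS_ends X S {A, B} = {cl A, cl B}" by (simp add: TS_ends_def)

lemma edge_iff: "e \<in> TS_edges X S \<longleftrightarrow> (\<exists>A\<in>S. e = {A, X - A})"
  unfolding TS_edges_def using Scomp by auto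

lemma edgeR: assumes "A \<in> S" shows "(cl A, cl (X - A)) \<in> RR" "(cl (X - A), cl A) \<in> RR"
proof -
  have e: "{A, X - A} \<in> TS_edges X S" using edge_iff assms by auto
  show "(cl A, cl (X - A)) \<in> RR" unfolding ug_walk_adj_def using e ends_eq by blast
  show "(cl (X - A), cl A) \<in> RR" unfolding ug_walk_adj_def using e ends_eq[of A "X - A"]
    by (auto simp: insert_commute)
qed

lemma cover_exists: assumes AS: "A \<in> S" and "C0 \<in> S" "A \<subset> C0" "C0 \<subset> D"
  shows "\<exists>C\<in>S. A \<subset> C \<and> C \<subset> D \<and> cov C A"
proof -
  define R2 where "R2 = {(C',C). C' \<in> S \<and> C \<in> S \<and> A \<subset> C' \<and> C' \<subset> C}"
  have wf: "wf R2"
  proof (rule ccontr)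
    assume "\<not> wf R2"
    then obtain f where f: "\<forall>i. (f (Suc i), f i) \<in> R2" unfolding wf_iff_no_infinite_down_chain by blast
    have "\<forall>n. f n \<in> S" using f unfolding R2_def by blast
    moreover have "strict_dec_chain f" using f unfolding R2_def strict_dec_chain_def by blast
    ultimately have "vanishing_dec S f" using cv unfolding chain_vanishing_def by blast
    moreover have "\<forall>n. A \<subseteq> f n" using f unfolding R2_def by blast
    ultimately show False using AS unfolding vanishing_dec_def by blast
  qed
  define Q where "Q = {C \<in> S. A \<subset> C \<and> C \<subset> D}"
  have "C0 \<in> Q" using assms Q_def by blast
  from wfE_min[OF wf this] obtain C where C: "C \<in> Q" and mn: "\<And>y. (y, C) \<in> R2 \<Longrightarrow> y \<notin> Q" by blast
  have "cov C A" unfolding cov_def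
  proof (intro conjI notI)
    show "A \<subset> C" using C Q_def by blast
    assume "\<exists>C'\<in>S. A \<subset> C' \<and> C' \<subset> C"
    then obtain C' where "C' \<in> S" "A \<subset> C'" "C' \<subset> C" by blast
    hence "(C', C) \<in> R2" "C' \<in> Q" using C unfolding R2_def Q_def by auto
    thus False using mn by blast
  qed
  thus ?thesis using C Q_def by blast
qed

lemma pathL: assumes DS: "D \<in> S" shows "A \<in> S \<Longrightarrow> A \<subset> D \<Longrightarrow> (cl A, cl (X - D)) \<in> RR\<^sup>*"
proof -
  define R1 where "R1 = {(C,A). A \<in> S \<and> C \<in> S \<and> A \<subset> C \<and> C \<subset> D}"
  have wf: "wf R1"
  proof (rule ccontr)
    assume "\<not> wf R1"
    then obtain f where f: "\<forall>i. (f (Suc i), f i) \<in> R1" unfolding wf_iff_no_infinite_down_chain by blast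
    have "\<forall>n. f n \<in> S" using f unfolding R1_def by blast
    moreover have "strict_inc_chain f" using f unfolding R1_def strict_inc_chain_def by blast
    ultimately have "vanishing_inc S f" using cv unfolding chain_vanishing_def by blast
    moreover have "\<forall>n. (X - D) \<inter> f n = {}" using f unfolding R1_def by blast
    ultimately show False using Scomp[OF DS] unfolding vanishing_inc_def by blast
  qed
  show "A \<in> S \<Longrightarrow> A \<subset> D \<Longrightarrow> (cl A, cl (X - D)) \<in> RR\<^sup>*"
  proof (induction A rule: wf_induct_rule[OF wf])
    case (1 A)
    show ?case
    proof (cases "cov D A")
      case True
      hence "cov (X - (X - D)) A" using dd[OF DS] by simp
      hence "(A, X - D) \<in> simrel X S" using sim_iff "1.prems" Scomp[OF DS] by blast
      hence "cl A = cl (X - D)" using cl_eq "1.prems" Scomp[OF DS] by blast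
      thus ?thesis by simp
    next
      case False
      then obtain C0 where "C0 \<in> S" "A \<subset> C0" "C0 \<subset> D" using "1.prems" unfolding cov_def by blast
      from cover_exists[OF "1.prems"(1) this] obtain C where
        C: "C \<in> S" "A \<subset> C" "C \<subset> D" "cov C A" by blast
      have "cov (X - (X - C)) A" using C dd by simp
      hence "(A, X - C) \<in> simrel X S" using sim_iff "1.prems" Scomp[OF C(1)] by blast
      hence e1: "cl A = cl (X - C)" using cl_eq "1.prems" Scomp[OF C(1)] by blast
      have e2: "(cl (X - C), cl C) \<in> RR" using edgeR(2)[OF C(1)] .
      have "(C, A) \<in> R1" using C "1.prems" R1_def by blast
      hence e3: "(cl C, cl (X - D)) \<in> RR\<^sup>*" using "1.IH" C by blast
      show ?thesis using e1 e2 e3 by (metis converse_rtrancl_into_rtrancl)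
    qed
  qed
qed

lemma RR_sym: "(u, v) \<in> RR\<^sup>* \<Longrightarrow> (v, u) \<in> RR\<^sup>*"
proof -
  have "RR\<inverse> = RR" unfolding ug_walk_adj_def by (auto simp: insert_commute)
  moreover assume "(u, v) \<in> RR\<^sup>*"
  ultimately show ?thesis by (metis rtrancl_converseI)
qed

lemma path_disj: assumes "A \<in> S" "B \<in> S" "A \<inter> B = {}" shows "(cl A, cl B) \<in> RR\<^sup>*"
proof (cases "A = X - B")
  case True
  hence "B = X - A" using assms Ssub by blast
  thus ?thesis using edgeR(1)[OF assms(1)] by simp
next
  case False
  hence "A \<subset> X - B" using assms Ssub by blast
  from pathL[OF Scomp[OF assms(2)] assms(1) this] show ?thesis using dd[OF assms(2)] by simp
qed

lemma path_all: assumes "A \<in> S" "B \<in> S" shows "(cl A, cl B) \<in> RR\<^sup>*"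
proof -
  have c1: "A \<inter> B = {} \<Longrightarrow> ?thesis" using path_disj assms by blast
  have c2: "A \<subseteq> B \<Longrightarrow> ?thesis"
  proof -
    assume "A \<subseteq> B"
    hence "A \<inter> (X - B) = {}" by blast
    hence "(cl A, cl (X - B)) \<in> RR\<^sup>*" using path_disj assms Scomp by blast
    moreover have "(cl (X - B), cl B) \<in> RR" using edgeR(2)[OF assms(2)] .
    ultimately show ?thesis by simp
  qed
  have c3: "B \<subseteq> A \<Longrightarrow> ?thesis"
  proof -
    assume "B \<subseteq> A"
    hence "B \<inter> (X - A) = {}" by blast
    hence "(cl B, cl (X - A)) \<in> RR\<^sup>*" using path_disj assms Scomp by blast
    moreover have "(cl (X - A), cl A) \<in> RR" using edgeR(2)[OF assms(1)] .
    ultimately have "(cl B, cl A) \<in> RR\<^sup>*" by simp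
    thus ?thesis using RR_sym by blast
  qed
  have c4: "X - A \<subseteq> B \<Longrightarrow> ?thesis"
  proof -
    assume "X - A \<subseteq> B"
    hence "(X - A) \<inter> (X - B) = {}" by blast
    hence "(cl (X - A), cl (X - B)) \<in> RR\<^sup>*" using path_disj assms Scomp by blast
    moreover have "(cl (X - B), cl B) \<in> RR" using edgeR(2)[OF assms(2)] .
    moreover have "(cl A, cl (X - A)) \<in> RR" using edgeR(1)[OF assms(1)] .
    ultimately show ?thesis by (meson converse_rtrancl_into_rtrancl rtrancl.rtrancl_into_rtrancl)
  qed
  show ?thesis using nest[OF assms] c1 c2 c3 c4 by blast
qed


lemma ends_of: "A \<in> S \<Longrightarrow> TS_ends X S {A, X - A} = {cl A, cl (X - A)}" by (rule ends_eq)

lemma g_wf: "ug_wf (TS_verts X S) (TS_edges X S) (TS_ends X S)"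
  unfolding ug_wf_def TS_verts_def
proof
  fix e assume "e \<in> TS_edges X S"
  then obtain A where A: "A \<in> S" "e = {A, X - A}" using edge_iff[THEN iffD1] by blast
  have eq: "TS_ends X S e = {cl A, cl (X - A)}" using A ends_eq by simp
  have m: "cl A \<in> S // simrel X S" "cl (X - A) \<in> S // simrel X S"
    using quotientI[OF A(1)] quotientI[OF Scomp[OF A(1)]] by auto
  show "TS_ends X S e \<subseteq> S // simrel X S \<and> (\<exists>u v. TS_ends X S e = {u, v})"
    unfolding eq by (intro conjI) (simp add: m, rule exI, rule exI, rule refl)
qed

lemma g_conn: "ug_connected (TS_verts X S) (TS_edges X S) (TS_ends X S)"
  unfolding ug_connected_def TS_verts_def
proof (intro ballI)
  fix u v assume "u \<in> S // simrel X S" "v \<in> S // simrel X S"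
  then obtain A B where "A \<in> S" "B \<in> S" "u = cl A" "v = cl B" by (elim quotientE)
  thus "(u, v) \<in> RR\<^sup>*" using path_all[of A B] by simp
qed

lemma g_noloop: "ug_no_loops (TS_edges X S) (TS_ends X S)"
  unfolding ug_no_loops_def
proof (intro ballI allI impI)
  fix e u v assume "e \<in> TS_edges X S" "TS_ends X S e = {u, v}"
  then obtain A where A: "A \<in> S" "{cl A, cl (X - A)} = {u, v}"
    using edge_iff[THEN iffD1] ends_eq by metis
  show "u \<noteq> v"
  proof
    assume "u = v" hence "cl A = cl (X - A)" using A by (auto simp: doubleton_eq_iff)
    thus False using cl_comp A by blast
  qed
qed

lemma cl_inj: assumes AS: "A \<in> S" and BS: "B \<in> S" and e1: "cl A = cl B" and e2: "cl (X - A) = cl (X - B)" shows "A = B"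
proof (rule ccontr)
  assume n: "A \<noteq> B"
  have AX: "A \<subseteq> X" "B \<subseteq> X" using Ssub AS BS by auto
  have 1: "A \<subset> X - B" using same_cl[OF AS BS e1 n] .
  have "X - A \<noteq> X - B" using n AX by blast
  hence "X - A \<subset> X - (X - B)" using same_cl[OF Scomp[OF AS] Scomp[OF BS] e2] by blast
  hence "X - A \<subseteq> B" using AX by blast
  moreover have "A \<subseteq> X - B" "A \<noteq> X - B" using 1 by auto
  ultimately show False using AX by blast
qed

lemma g_nomulti: "ug_no_multi (TS_edges X S) (TS_ends X S)"
  unfolding ug_no_multi_def
proof (rule inj_onI)
  fix e1 e2 assume e1: "e1 \<in> TS_edges X S" and e2: "e2 \<in> TS_edges X S" and h: "TS_ends X S e1 = TS_ends X S e2"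
  obtain A where A: "A \<in> S" "e1 = {A, X - A}" using edge_iff[THEN iffD1, OF e1] by blast
  obtain B where B: "B \<in> S" "e2 = {B, X - B}" using edge_iff[THEN iffD1, OF e2] by blast
  have "TS_ends X S e1 = {cl A, cl (X - A)}" using A(2) ends_eq by simp
  moreover have "TS_ends X S e2 = {cl B, cl (X - B)}" using B(2) ends_eq by simp
  ultimately have "{cl A, cl (X - A)} = {cl B, cl (X - B)}" using h by simp
  hence "(cl A = cl B \<and> cl (X - A) = cl (X - B)) \<or> (cl A = cl (X - B) \<and> cl (X - A) = cl B)"
    unfolding doubleton_eq_iff by blast
  thus "e1 = e2"
  proof
    assume "cl A = cl B \<and> cl (X - A) = cl (X - B)"
    hence "A = B" using cl_inj[OF A(1) B(1)] by blast
    thus ?thesis using A(2) B(2) by simp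
  next
    assume h2: "cl A = cl (X - B) \<and> cl (X - A) = cl B"
    have "cl (X - A) = cl (X - (X - B))" using h2 dd[OF B(1)] by simp
    hence "A = X - B" using cl_inj[OF A(1) Scomp[OF B(1)]] h2 by blast
    hence "X - A = B" using dd[OF B(1)] by simp
    thus ?thesis using A(2) B(2) \<open>A = X - B\<close> by (simp add: insert_commute)
  qed
qed

lemma g_acyc: "ug_acyclic (TS_edges X S) (TS_ends X S)"
  unfolding ug_acyclic_def
proof
  assume "\<exists>es vs. ug_cycle (TS_edges X S) (TS_ends X S) es vs"
  then obtain es vs where cyc: "ug_cycle (TS_edges X S) (TS_ends X S) es vs" by blast
  define n where "n = length es"
  have cy: "length es = length vs \<and> es \<noteq> [] \<and> distinct es \<and> distinct vs \<and> set es \<subseteq> TS_edges X S \<and>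
     (\<forall>i < length es. TS_ends X S (es ! i) = {vs ! i, vs ! (Suc i mod length vs)})"
    using cyc unfolding ug_cycle_def .
  note cy1 = cy[THEN conjunct1]
  note cy2 = cy[THEN conjunct2, THEN conjunct1]
  note cy3 = cy[THEN conjunct2, THEN conjunct2, THEN conjunct1]
  note cy5 = cy[THEN conjunct2, THEN conjunct2, THEN conjunct2, THEN conjunct2, THEN conjunct1]
  note cy6 = cy[THEN conjunct2, THEN conjunct2, THEN conjunct2, THEN conjunct2, THEN conjunct2]
  have len: "length vs = n" using cy1 n_def by simp
  have nz: "n > 0" using cy2 unfolding n_def by simp
  have dis: "distinct es" using cy3 .
  have sub: "set es \<subseteq> TS_edges X S" using cy5 .
  have en: "TS_ends X S (es ! i) = {vs ! i, vs ! (Suc i mod n)}" if "i < n" for i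
    using cy6 that len n_def by simp
  have "\<forall>i. \<exists>A. i < n \<longrightarrow> (A \<in> S \<and> es ! i = {A, X - A} \<and> cl A = vs ! i \<and> cl (X - A) = vs ! (Suc i mod n))"
  proof (intro allI impI)
    fix i
    show "\<exists>A. i < n \<longrightarrow> (A \<in> S \<and> es ! i = {A, X - A} \<and> cl A = vs ! i \<and> cl (X - A) = vs ! (Suc i mod n))"
    proof (cases "i < n")
      case False thus ?thesis by simp
    next
      case True
      hence ei: "es ! i \<in> TS_edges X S" using sub n_def by auto
      obtain B where B: "B \<in> S" "es ! i = {B, X - B}" using edge_iff[THEN iffD1, OF ei] by blast
      have "{cl B, cl (X - B)} = {vs ! i, vs ! (Suc i mod n)}" using en[OF True] B ends_eq by simp
      hence "(cl B = vs ! i \<and> cl (X - B) = vs ! (Suc i mod n)) \<or> (cl B = vs ! (Suc i mod n) \<and> cl (X - B) = vs ! i)"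
        unfolding doubleton_eq_iff by blast
      thus ?thesis
      proof
        assume "cl B = vs ! i \<and> cl (X - B) = vs ! (Suc i mod n)"
        thus ?thesis using B by (intro exI[of _ B] impI) simp
      next
        assume h: "cl B = vs ! (Suc i mod n) \<and> cl (X - B) = vs ! i"
        have "X - B \<in> S \<and> es ! i = {X - B, X - (X - B)} \<and> cl (X - B) = vs ! i \<and> cl (X - (X - B)) = vs ! (Suc i mod n)"
        proof (intro conjI)
          show "X - B \<in> S" using Scomp[OF B(1)] .
          show "es ! i = {X - B, X - (X - B)}" using B(2) dd[OF B(1)] by (simp add: insert_commute)
          show "cl (X - B) = vs ! i" using h by simp
          show "cl (X - (X - B)) = vs ! (Suc i mod n)" using h dd[OF B(1)] by simp
        qed
        thus ?thesis by (intro exI[of _ "X - B"] impI)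
      qed
    qed
  qed
  from choice[OF this] obtain A where A0: "\<forall>i. i < n \<longrightarrow> (A i \<in> S \<and> es ! i = {A i, X - A i} \<and> cl (A i) = vs ! i \<and> cl (X - A i) = vs ! (Suc i mod n))"
    by (rule exE)
  have A: "A i \<in> S \<and> es ! i = {A i, X - A i} \<and> cl (A i) = vs ! i \<and> cl (X - A i) = vs ! (Suc i mod n)" if "i < n" for i
    using A0[rule_format, OF that] .
  have step: "A (Suc i mod n) \<subset> A i" if i: "i < n" for i
  proof -
    define j where "j = Suc i mod n"
    have j: "j < n" using nz j_def by simp
    note Ai = A[OF i] and Aj = A[OF j]
    have eq: "cl (X - A i) = cl (A j)" using Ai Aj j_def by simp
    have neq: "X - A i \<noteq> A j"
    proof
      assume h: "X - A i = A j"
      show False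
      proof (cases "j = i")
        case True
        hence "X - A i = A i" using h by simp
        hence "A i = {}" by blast
        thus False using Sne Ai by simp
      next
        case False
        have "X - A j = A i" using h dd[of "A i"] Ai by simp
        hence "es ! j = {X - A i, A i}" using Aj h by simp
        hence "es ! j = es ! i" using Ai by (simp add: insert_commute)
        thus False using False dis i j n_def by (simp add: nth_eq_iff_index_eq)
      qed
    qed
    have "A j \<noteq> X - A i" using neq by simp
    from same_cl[OF Aj[THEN conjunct1] Scomp[OF Ai[THEN conjunct1]] eq[symmetric] this]
    have "A j \<subset> X - (X - A i)" .
    thus ?thesis using dd Ai j_def by simp
  qed
  have "\<forall>k. 1 \<le> k \<and> k \<le> n \<longrightarrow> A (k mod n) \<subset> A 0"
  proof (intro allI)
    fix k show "1 \<le> k \<and> k \<le> n \<longrightarrow> A (k mod n) \<subset> A 0"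
    proof (induction k)
      case 0 thus ?case by simp
    next
      case (Suc k)
      show ?case
      proof (cases "k = 0")
        case True thus ?thesis using step[OF nz] by simp
      next
        case False
        show ?thesis
        proof
          assume h: "1 \<le> Suc k \<and> Suc k \<le> n"
          hence kn: "k < n" by simp
          have "A (k mod n) \<subset> A 0" using Suc.IH h False by simp
          moreover have "A (Suc k mod n) \<subset> A k" using step[OF kn] .
          ultimately show "A (Suc k mod n) \<subset> A 0" using kn by auto
        qed
      qed
    qed
  qed
  moreover have "1 \<le> n \<and> n \<le> n" using nz by simp
  ultimately have "A (n mod n) \<subset> A 0" by blast
  thus False by simp
qed


end

theorem mainTheorem5:
  fixes X :: "'a set" and S :: "'a set set"
  assumes "S \<noteq> {}"
    and "\<forall>A\<in>S. A \<noteq> {} \<and> A \<subseteq> X"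
    and "self_dual X S"
    and "nested X S"
    and "chain_vanishing S"
  shows "equiv S (simrel X S) \<and> ug_tree (TS_verts X S) (TS_edges X S) (TS_ends X S)"
proof -
  interpret NS X S by (rule NS.intro[OF assms])
  show ?thesis unfolding ug_tree_def
    by (intro conjI equiv_sim g_wf g_conn g_acyc g_noloop g_nomulti)
qed

end
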